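(* Let $\mathcal{X}$ be finite and let $V_n:\mathcal{X}^n\rightsquigarrow\mathcal{Y}_n$ ($\mathcal{Y}_n$ countable) be a channel sequence such that the limit $\mathbf{I}(V)=\lim_{n\to\infty}\mathbf{I}(V_n)/n$ exists, and such that $\varphi_n=-\log_2\inf\big(\{V_n(y|x)\}_{x,y}\setminus\{0\}\big)$ does not converge to $0$. Then there exists a sequence of input distributions $\hat p_n$ on $\mathcal{X}^n$ with $\lim_{n\to\infty}\mathbf{I}(V_n,\hat p_n)/n=\mathbf{I}(V)$ and $\mathbf{V}(V_n,\hat p_n)=O(\varphi_n^2+n^2)$.
   Context: A channel $W:\mathcal{A}\rightsquigarrow\mathcal{B}$ is a family of probability distributions $W(\cdot|a)$ on $\mathcal{B}$. For a distribution $p$: $p\circ W(a,b)=p(a)W(b|a)$, $p\bullet W(b)=\sum_a p\circ W(a,b)$; $\mathbf{i}(W,p,a,b)=\log_2\frac{W(b|a)}{p\bullet W(b)}$ if $W(b|a)>0$ and $p\bullet W(b)>0$, else $0$; $\mathbf{I}(W,p)=\mathbb{E}_{p\circ W}[\mathbf{i}(W,p,a,b)]$, $\mathbf{I}(W)=\max_p\mathbf{I}(W,p)$; the mutual information variance is $\mathbf{V}(W,p)=\mathbb{E}_{p\circ W(a,b)}\big[(\mathbf{i}(W,p,a,b)-\mathbf{I}(W,p))^2\big]$. $a_n=O(b_n)$ means $|a_n|\le Cb_n$ for some constant $C$ and all large $n$. *)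

theory Defs
  imports "HOL-Probability.Probability"
begin

definition joint_dist :: "'a pmf \<Rightarrow> ('a \<Rightarrow> 'b pmf) \<Rightarrow> ('a \<times> 'b) pmf" where
  "joint_dist p W = bind_pmf p (\<lambda>a. map_pmf (\<lambda>b. (a, b)) (W a))"

definition out_dist :: "'a pmf \<Rightarrow> ('a \<Rightarrow> 'b pmf) \<Rightarrow> 'b pmf" where
  "out_dist p W = bind_pmf p W"

definition info_density :: "('a \<Rightarrow> 'b pmf) \<Rightarrow> 'a pmf \<Rightarrow> 'a \<Rightarrow> 'b \<Rightarrow> real" where
  "info_density W p a b =
     (if pmf (W a) b > 0 \<and> pmf (out_dist p W) b > 0
      then log 2 (pmf (W a) b / pmf (out_dist p W) b) else 0)"

definition mutual_info :: "('a \<Rightarrow> 'b pmf) \<Rightarrow> 'a pmf \<Rightarrow> real" where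
  "mutual_info W p =
     measure_pmf.expectation (joint_dist p W) (\<lambda>(a, b). info_density W p a b)"

definition mi_variance :: "('a \<Rightarrow> 'b pmf) \<Rightarrow> 'a pmf \<Rightarrow> real" where
  "mi_variance W p =
     measure_pmf.expectation (joint_dist p W)
       (\<lambda>(a, b). (info_density W p a b - mutual_info W p)^2)"

definition capacity :: "'a set \<Rightarrow> ('a \<Rightarrow> 'b pmf) \<Rightarrow> real" where
  "capacity A W = Sup {mutual_info W p | p. set_pmf p \<subseteq> A}"

definition min_prob_exp :: "'a set \<Rightarrow> ('a \<Rightarrow> 'b pmf) \<Rightarrow> ereal" where
  "min_prob_exp A W =
     (let m = Inf {pmf (W a) b | a b. a \<in> A \<and> pmf (W a) b \<noteq> 0}
      in if m = 0 then \<infinity> else ereal (- log 2 m))"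

end

theory Submission
  imports Defs
begin

lemma joint_fst: "map_pmf fst (joint_dist p W) = p"
proof -
  have "map_pmf fst (joint_dist p W) = bind_pmf p (\<lambda>a. map_pmf fst (map_pmf (\<lambda>b. (a, b)) (W a)))"
    by (simp only: joint_dist_def map_bind_pmf)
  also have "\<dots> = bind_pmf p (\<lambda>a. return_pmf a)"
    by (simp only: map_pmf_comp fst_conv map_pmf_const)
  also have "\<dots> = p" by (rule bind_return_pmf')
  finally show ?thesis .
qed

lemma exp_joint_fst:
  fixes f :: "'a \<Rightarrow> real"
  shows   "measure_pmf.expectation (joint_dist p W) (\<lambda>x. f (fst x)) = measure_pmf.expectation p f"
  using integral_map_pmf[of fst "joint_dist p W" f] joint_fst[of p W] by simp

lemma set_joint:
  assumes "x \<in> set_pmf (joint_dist p W)"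
  shows "fst x \<in> set_pmf p" "pmf (W (fst x)) (snd x) > 0"
  using assms unfolding joint_dist_def by (auto simp: set_bind_pmf set_map_pmf pmf_positive)

lemma out_ge:
  assumes "finite A" "set_pmf p \<subseteq> A"
  shows "pmf p a * pmf (W a) b \<le> pmf (out_dist p W) b"
proof (cases "a \<in> A")
  case True
  have "pmf (out_dist p W) b = (\<Sum>a\<in>A. pmf p a * pmf (W a) b)"
    unfolding out_dist_def pmf_bind
    by (subst integral_measure_pmf[OF assms(1)]) (use assms(2) in blast, simp)
  also have "\<dots> \<ge> pmf p a * pmf (W a) b"
    by (rule member_le_sum) (use True assms(1) in simp_all)
  finally show ?thesis .
next
  case False
  then have "a \<notin> set_pmf p" using assms(2) by blast
  then have "pmf p a = 0" by (simp add: set_pmf_iff)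
  then show ?thesis by simp
qed

lemma info_upper:
  assumes "finite A" "set_pmf p \<subseteq> A" "pmf p a > 0"
  shows "info_density W p a b \<le> - log 2 (pmf p a)"
proof (cases "pmf (W a) b > 0 \<and> pmf (out_dist p W) b > 0")
  case True
  have ge: "pmf p a * pmf (W a) b \<le> pmf (out_dist p W) b" by (rule out_ge[OF assms(1,2)])
  have pos: "0 < pmf p a * pmf (W a) b" using True assms(3) by simp
  have "pmf (W a) b / pmf (out_dist p W) b \<le> pmf (W a) b / (pmf p a * pmf (W a) b)"
    by (rule divide_left_mono[OF ge]) (use pos True in auto)
  also have "\<dots> = 1 / pmf p a" using True by simp
  finally have "log 2 (pmf (W a) b / pmf (out_dist p W) b) \<le> log 2 (1 / pmf p a)"
    by (rule log_mono[rotated 2]) (use True in auto)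
  then show ?thesis using True assms(3) by (simp add: info_density_def log_divide)
next
  case False
  have "pmf p a \<le> 1" by (rule pmf_le_1)
  then have "log 2 (pmf p a) \<le> 0" using assms(3) by (simp add: log_le_zero_cancel_iff)
  then show ?thesis using False unfolding info_density_def by (simp only: if_False)
qed

lemma info_lower:
  assumes "finite A" "set_pmf p \<subseteq> A" "pmf p a > 0" "m > 0" "pmf (W a) b > 0"
    "m \<le> pmf (W a) b"
  shows "log 2 m \<le> info_density W p a b"
proof -
  have ge: "pmf p a * pmf (W a) b \<le> pmf (out_dist p W) b" by (rule out_ge[OF assms(1,2)])
  then have pos: "pmf (out_dist p W) b > 0" using assms(3,5)
    by (meson less_le_trans mult_pos_pos)
  have le1: "pmf (out_dist p W) b \<le> 1" by (rule pmf_le_1)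
  have "pmf (W a) b / 1 \<le> pmf (W a) b / pmf (out_dist p W) b"
    by (rule divide_left_mono[OF le1]) (use pos assms(5) in auto)
  then have "m \<le> pmf (W a) b / pmf (out_dist p W) b" using assms(6) by simp
  then have "log 2 m \<le> log 2 (pmf (W a) b / pmf (out_dist p W) b)"
    by (rule log_mono[rotated 2]) (use assms(4) in auto)
  then show ?thesis using assms(5) pos by (simp add: info_density_def)
qed

lemma ent_point:
  fixes t :: real
  assumes "0 \<le> t" "t \<le> 1"
  shows "t * (- log 2 t) \<le> 1 / ln 2"
proof (cases "t = 0")
  case True then show ?thesis by simp
next
  case False
  then have t: "t > 0" using assms by simp
  have "ln (1/t) \<le> 1/t - 1" by (rule ln_le_minus_one) (use t in simp)
  then have "- ln t \<le> 1/t - 1" using t by (simp add: ln_div)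
  then have "t * (- ln t) \<le> t * (1/t - 1)" by (rule mult_left_mono) (use t in auto)
  also have "\<dots> \<le> 1" using t assms by (simp add: right_diff_distrib)
  finally have "t * (- ln t) \<le> 1" .
  then show ?thesis by (simp add: log_def divide_simps)
qed

lemma mi_bound:
  assumes "finite A" "set_pmf p \<subseteq> A"
  shows "mutual_info W p \<le> real (card A) / ln 2"
proof (cases "integrable (joint_dist p W) (\<lambda>(a, b). info_density W p a b)")
  case False
  then show ?thesis unfolding mutual_info_def
    by (simp add: not_integrable_integral_eq)
next
  case True
  define g where "g = (\<lambda>a. - log 2 (pmf p a))"
  have fin: "finite (set_pmf p)" using assms finite_subset by blast
  have ip: "integrable p g" by (rule integrable_measure_pmf_finite[OF fin])
  have ig: "integrable (joint_dist p W) (\<lambda>x. g (fst x))"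
    using ip integrable_map_pmf_eq[of fst "joint_dist p W" g] joint_fst[of p W] by simp
  have "mutual_info W p \<le> measure_pmf.expectation (joint_dist p W) (\<lambda>x. g (fst x))"
    unfolding mutual_info_def
  proof (rule integral_mono_AE[OF True ig])
    show "AE x in measure_pmf (joint_dist p W). (case x of (a, b) \<Rightarrow> info_density W p a b) \<le> g (fst x)"
    proof -
      have "\<forall>x\<in>set_pmf (joint_dist p W). (case x of (a, b) \<Rightarrow> info_density W p a b) \<le> g (fst x)"
      proof
        fix x assume "x \<in> set_pmf (joint_dist p W)"
        then have "fst x \<in> set_pmf p" using set_joint(1) by blast
        then have "pmf p (fst x) > 0" by (simp add: pmf_positive)
        then have "info_density W p (fst x) (snd x) \<le> g (fst x)"
          using info_upper[OF assms] by (simp add: g_def)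
        then show "(case x of (a, b) \<Rightarrow> info_density W p a b) \<le> g (fst x)"
          by (simp add: case_prod_beta)
      qed
      then show ?thesis by (simp add: AE_measure_pmf_iff)
    qed
  qed
  also have "\<dots> = measure_pmf.expectation p g" by (rule exp_joint_fst)
  also have "\<dots> = (\<Sum>a\<in>A. pmf p a * g a)"
    by (subst integral_measure_pmf[OF assms(1)]) (use assms(2) in blast, simp)
  also have "\<dots> \<le> (\<Sum>a\<in>A. 1 / ln 2)"
    by (rule sum_mono) (unfold g_def, rule ent_point, simp_all add: pmf_le_1)
  also have "\<dots> = real (card A) / ln 2" by simp
  finally show ?thesis .
qed

lemma sq_point:
  fixes t K :: real
  assumes "0 \<le> t" "t \<le> 1" "K \<ge> 1"
  shows "t * (ln t)^2 \<le> t * (4 * (ln K)^2) + 16 / K"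
proof (cases "t = 0")
  case True then show ?thesis using assms by simp
next
  case False
  then have t: "t > 0" using assms by simp
  have lnt: "ln t \<le> 0" using t assms by simp
  have lnK: "ln K \<ge> 0" using assms by simp
  show ?thesis
  proof (cases "t \<ge> 1 / K^2")
    case True
    have "ln (1 / K^2) \<le> ln t" using True assms t by (subst ln_le_cancel_iff) auto
    then have "- (2 * ln K) \<le> ln t" using assms by (simp add: ln_div ln_realpow)
    then have "(ln t)^2 \<le> (2 * ln K)^2" using lnt lnK
      by (smt (verit) power_mono minus_mult_minus power2_eq_square)
    then have "t * (ln t)^2 \<le> t * (4 * (ln K)^2)" using t
      by (simp add: mult_left_mono power_mult_distrib)
    moreover have "16 / K \<ge> 0" using assms by simp
    ultimately show ?thesis by linarith
  next
    case False
    define u where "u = sqrt (sqrt t)"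
    have u: "u > 0" using t by (simp add: u_def)
    have lnu: "ln u = ln t / 4" using t by (simp add: u_def ln_sqrt)
    have "ln (1/u) \<le> 1/u - 1" by (rule ln_le_minus_one) (use u in simp)
    then have "- ln t / 4 < 1 / u" using u lnu by (simp add: ln_div)
    then have a: "- ln t < 4 / u" by simp
    have b: "0 \<le> - ln t" using lnt by simp
    have "(- ln t)^2 < (4 / u)^2"
      by (rule power_strict_mono[OF a b]) simp
    then have "(ln t)^2 < 16 / u^2" by (simp add: power_divide)
    moreover have "u^2 = sqrt t" using t by (simp add: u_def)
    ultimately have c: "(ln t)^2 < 16 / sqrt t" by simp
    have "t * (ln t)^2 < t * (16 / sqrt t)" by (rule mult_strict_left_mono[OF c t])
    also have "\<dots> = 16 * sqrt t" using t
      by (metis real_div_sqrt times_divide_eq_left times_divide_eq_right mult.commute less_eq_real_def)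
    also have "sqrt t < 1 / K"
    proof -
      have "t < (1/K)^2" using False by (simp add: power_divide)
      then have "sqrt t < sqrt ((1/K)^2)" by (subst real_sqrt_less_iff) simp
      then show ?thesis using assms by simp
    qed
    then have "16 * sqrt t < 16 / K" by simp
    finally have "t * (ln t)^2 < 16 / K" .
    moreover have "t * (4 * (ln K)^2) \<ge> 0" using t by simp
    ultimately show ?thesis by linarith
  qed
qed

lemma sq_sum:
  assumes "finite A" "set_pmf p \<subseteq> A" "A \<noteq> {}"
  shows "(\<Sum>a\<in>A. pmf p a * (ln (pmf p a))^2) \<le> 4 * (ln (real (card A)))^2 + 16"
proof -
  define K where "K = real (card A)"
  have "card A > 0" using assms card_gt_0_iff by blast
  then have K: "K \<ge> 1" by (simp add: K_def)
  have "(\<Sum>a\<in>A. pmf p a * (ln (pmf p a))^2) \<le> (\<Sum>a\<in>A. pmf p a * (4 * (ln K)^2) + 16 / K)"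
    by (rule sum_mono, rule sq_point) (use K pmf_le_1 in auto)
  also have "\<dots> = (\<Sum>a\<in>A. pmf p a) * (4 * (ln K)^2) + K * (16 / K)"
    by (simp add: sum.distrib sum_distrib_right K_def)
  also have "\<dots> = 4 * (ln K)^2 + 16"
    using sum_pmf_eq_1[OF assms(1,2)] K by simp
  finally show ?thesis by (simp add: K_def)
qed

lemma abs_le_sq: "\<bar>y::real\<bar> \<le> 1 + y^2"
proof (cases "\<bar>y\<bar> \<le> 1")
  case True then show ?thesis by (smt (verit) zero_le_power2)
next
  case False
  then have "\<bar>y\<bar> * 1 \<le> \<bar>y\<bar> * \<bar>y\<bar>" by (intro mult_left_mono) auto
  then show ?thesis by (simp add: power2_eq_square)
qed

lemma var_bound:
  assumes "finite A" "set_pmf p \<subseteq> A" "m > 0"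
    "\<forall>a\<in>A. \<forall>b. pmf (W a) b \<noteq> 0 \<longrightarrow> m \<le> pmf (W a) b"
  shows "\<bar>mi_variance W p\<bar> \<le> (log 2 m)^2 + (\<Sum>a\<in>A. pmf p a * (log 2 (pmf p a))^2)"
proof -
  define J where "J = joint_dist p W"
  define f where "f = (\<lambda>x. info_density W p (fst x) (snd x))"
  define g where "g = (\<lambda>a. (log 2 (pmf p a))^2)"
  define B where "B = (log 2 m)^2 + (\<Sum>a\<in>A. g a)"
  have pt: "\<forall>x\<in>set_pmf J. (f x)^2 \<le> (log 2 m)^2 + g (fst x)"
  proof
    fix x assume x: "x \<in> set_pmf J"
    have a: "fst x \<in> set_pmf p" and w: "pmf (W (fst x)) (snd x) > 0"
      using set_joint[of x p W] x unfolding J_def by auto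
    have pa: "pmf p (fst x) > 0" using a by (simp add: pmf_positive)
    have aA: "fst x \<in> A" using a assms(2) by blast
    have up: "f x \<le> - log 2 (pmf p (fst x))" using info_upper[OF assms(1,2) pa] f_def by simp
    have mle: "m \<le> pmf (W (fst x)) (snd x)" using assms(4) aA w by auto
    have lo: "log 2 m \<le> f x" using info_lower[of A p "fst x" m W "snd x", OF assms(1,2) pa assms(3) w mle] f_def by simp
    show "(f x)^2 \<le> (log 2 m)^2 + g (fst x)"
    proof (cases "f x \<ge> 0")
      case True
      then have "(f x)^2 \<le> (- log 2 (pmf p (fst x)))^2" using up by (intro power_mono) auto
      moreover have "(log 2 m)^2 \<ge> 0" by simp
      ultimately show ?thesis unfolding g_def by (simp only: power2_minus)
    next
      case False
      then have "(- f x)^2 \<le> (- log 2 m)^2" using lo by (intro power_mono) auto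
      moreover have "g (fst x) \<ge> 0" by (simp add: g_def)
      ultimately show ?thesis by (simp only: power2_minus)
    qed
  qed
  have gB: "\<forall>x\<in>set_pmf J. g (fst x) \<le> (\<Sum>a\<in>A. g a)"
  proof
    fix x assume x: "x \<in> set_pmf J"
    have "fst x \<in> A" using set_joint(1)[of x p W] x assms(2) unfolding J_def by blast
    then show "g (fst x) \<le> (\<Sum>a\<in>A. g a)"
      by (intro member_le_sum) (simp_all add: g_def assms(1))
  qed
  have bnd: "\<forall>x\<in>set_pmf J. (f x)^2 \<le> B" using pt gB unfolding B_def by fastforce
  have i1: "integrable J f"
  proof (rule measure_pmf.integrable_const_bound[where B="1 + B"])
    show "AE x in measure_pmf J. norm (f x) \<le> 1 + B"
      unfolding AE_measure_pmf_iff using bnd abs_le_sq by (smt (verit) real_norm_def)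
  qed simp
  have i2: "integrable J (\<lambda>x. (f x)^2)"
  proof (rule measure_pmf.integrable_const_bound[where B="B"])
    show "AE x in measure_pmf J. norm ((f x)^2) \<le> B"
      unfolding AE_measure_pmf_iff using bnd by simp
  qed simp
  have fin: "finite (set_pmf p)" using assms finite_subset by blast
  have ig0: "integrable p g" by (rule integrable_measure_pmf_finite[OF fin])
  have ig: "integrable J (\<lambda>x. g (fst x))"
    using ig0 integrable_map_pmf_eq[of fst J g] joint_fst[of p W] unfolding J_def by simp
  have mv: "mi_variance W p = measure_pmf.expectation J (\<lambda>x. (f x - measure_pmf.expectation J f)^2)"
    unfolding mi_variance_def mutual_info_def J_def f_def by (simp only: split_beta')
  have nonneg: "mi_variance W p \<ge> 0" unfolding mv by (rule Bochner_Integration.integral_nonneg) simp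
  have "\<bar>mi_variance W p\<bar> = measure_pmf.expectation J (\<lambda>x. (f x)^2) - (measure_pmf.expectation J f)^2"
    using nonneg measure_pmf.variance_eq[OF i1 i2] mv by simp
  also have "\<dots> \<le> measure_pmf.expectation J (\<lambda>x. (f x)^2)" by simp
  also have "\<dots> \<le> measure_pmf.expectation J (\<lambda>x. (log 2 m)^2 + g (fst x))"
    by (rule integral_mono_AE[OF i2]) (use ig pt in \<open>auto simp: AE_measure_pmf_iff\<close>)
  also have "\<dots> = (log 2 m)^2 + measure_pmf.expectation J (\<lambda>x. g (fst x))"
    using ig by (subst Bochner_Integration.integral_add) auto
  also have "measure_pmf.expectation J (\<lambda>x. g (fst x)) = measure_pmf.expectation p g"
    unfolding J_def by (rule exp_joint_fst)
  also have "\<dots> = (\<Sum>a\<in>A. pmf p a * g a)"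
    by (subst integral_measure_pmf[OF assms(1)]) (use assms(2) in blast, simp)
  finally show ?thesis by (simp add: g_def)
qed

theorem proposition9:
  fixes V :: "nat \<Rightarrow> 'x::finite list \<Rightarrow> 'y::countable pmf" and IV :: real
  assumes lim: "(\<lambda>n. capacity {xs. length xs = n} (V n) / real n) \<longlonglongrightarrow> IV"
    and phi: "\<not> ((\<lambda>n. min_prob_exp {xs. length xs = n} (V n)) \<longlonglongrightarrow> 0)"
  shows "\<exists>p :: nat \<Rightarrow> 'x list pmf.
           (\<forall>n. set_pmf (p n) \<subseteq> {xs. length xs = n}) \<and>
           (\<lambda>n. mutual_info (V n) (p n) / real n) \<longlonglongrightarrow> IV \<and>
           (\<exists>C>0. \<forall>\<^sub>F n in sequentially.
              ereal \<bar>mi_variance (V n) (p n)\<bar>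
                \<le> ereal C * ((min_prob_exp {xs. length xs = n} (V n))^2 + ereal (real n)^2))"
proof -
  define A where "A n = {xs::'x list. length xs = n}" for n
  have finA: "finite (A n)" for n
    using finite_lists_length_eq[of "UNIV::'x set" n] by (simp add: A_def)
  have cardA: "card (A n) = CARD('x)^n" for n
    using card_lists_length_eq[of "UNIV::'x set" n] by (simp add: A_def)
  have repA: "replicate n undefined \<in> A n" for n by (simp add: A_def)
  define S where "S n = {mutual_info (V n) p | p. set_pmf p \<subseteq> A n}" for n
  have capS: "capacity (A n) (V n) = Sup (S n)" for n unfolding capacity_def S_def ..
  have Sne: "S n \<noteq> {}" for n
  proof -
    have "mutual_info (V n) (return_pmf (replicate n undefined)) \<in> S n"
      unfolding S_def using repA by auto
    then show ?thesis by blast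
  qed
  have Sbdd: "bdd_above (S n)" for n
    unfolding S_def bdd_above_def using mi_bound[OF finA] by blast
  have "\<forall>n. \<exists>q. set_pmf q \<subseteq> A n \<and> Sup (S n) - 1 < mutual_info (V n) q \<and> mutual_info (V n) q \<le> Sup (S n)"
  proof
    fix n
    obtain x where x: "x \<in> S n" "Sup (S n) - 1 < x"
      using less_cSupD[OF Sne, of "Sup (S n) - 1" n] by auto
    then obtain q where q: "x = mutual_info (V n) q" "set_pmf q \<subseteq> A n" unfolding S_def by blast
    have "x \<le> Sup (S n)" by (rule cSup_upper[OF x(1) Sbdd])
    then show "\<exists>q. set_pmf q \<subseteq> A n \<and> Sup (S n) - 1 < mutual_info (V n) q \<and> mutual_info (V n) q \<le> Sup (S n)"
      using q x by blast
  qed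
  then obtain p where p: "\<And>n. set_pmf (p n) \<subseteq> A n"
    "\<And>n. Sup (S n) - 1 < mutual_info (V n) (p n)" "\<And>n. mutual_info (V n) (p n) \<le> Sup (S n)"
    by metis
  have L1: "(\<lambda>n. Sup (S n) / real n) \<longlonglongrightarrow> IV" using lim by (simp add: capS[symmetric] A_def)
  have L2: "(\<lambda>n. (Sup (S n) - 1) / real n) \<longlonglongrightarrow> IV"
  proof -
    have "(\<lambda>n. Sup (S n) / real n - 1 / real n) \<longlonglongrightarrow> IV - 0"
      by (intro tendsto_diff L1 lim_1_over_n)
    then show ?thesis by (simp add: diff_divide_distrib)
  qed
  have Lim: "(\<lambda>n. mutual_info (V n) (p n) / real n) \<longlonglongrightarrow> IV"
  proof (rule tendsto_sandwich[OF _ _ L2 L1])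
    show "\<forall>\<^sub>F n in sequentially. (Sup (S n) - 1) / real n \<le> mutual_info (V n) (p n) / real n"
      using p(2) by (intro always_eventually allI divide_right_mono) (auto intro: less_imp_le)
    show "\<forall>\<^sub>F n in sequentially. mutual_info (V n) (p n) / real n \<le> Sup (S n) / real n"
      using p(3) by (intro always_eventually allI divide_right_mono) auto
  qed
  define c where "c = real CARD('x)"
  have c1: "c \<ge> 1" unfolding c_def by (simp add: Suc_leI)
  define D where "D = (4 * (ln c)^2 + 16) / (ln 2)^2"
  define C where "C = max 1 D"
  have Cpos: "C > 0" unfolding C_def by simp
  have var: "ereal \<bar>mi_variance (V n) (p n)\<bar>
                \<le> ereal C * ((min_prob_exp {xs. length xs = n} (V n))^2 + ereal (real n)^2)"
    if n1: "n \<ge> 1" for n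
  proof -
    define M where "M = {pmf (V n a) b | a b. a \<in> A n \<and> pmf (V n a) b \<noteq> 0}"
    define m where "m = Inf M"
    have mpe: "min_prob_exp {xs. length xs = n} (V n) = (if m = 0 then \<infinity> else ereal (- log 2 m))"
      unfolding min_prob_exp_def m_def M_def A_def Let_def ..
    show ?thesis
    proof (cases "m = 0")
      case True
      then show ?thesis using Cpos by (simp add: mpe)
    next
      case False
      obtain b0 where b0: "b0 \<in> set_pmf (V n (replicate n undefined))"
        using set_pmf_not_empty[of "V n (replicate n undefined)"] by blast
      have b0': "pmf (V n (replicate n undefined)) b0 \<in> M"
        using b0 repA unfolding M_def by (auto simp: set_pmf_iff)
      have Mne: "M \<noteq> {}" using b0' by blast
      have m0: "m \<ge> 0" unfolding m_def by (rule cInf_greatest[OF Mne]) (auto simp: M_def)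
      have mpos: "m > 0" using m0 False by simp
      have bddM: "bdd_below M" unfolding M_def bdd_below_def by (intro exI[of _ 0]) auto
      have mle: "\<forall>a\<in>A n. \<forall>b. pmf (V n a) b \<noteq> 0 \<longrightarrow> m \<le> pmf (V n a) b"
        unfolding m_def using bddM by (auto intro!: cInf_lower simp: M_def)
      have vb: "\<bar>mi_variance (V n) (p n)\<bar> \<le> (log 2 m)^2 + (\<Sum>a\<in>A n. pmf (p n) a * (log 2 (pmf (p n) a))^2)"
        by (rule var_bound[OF finA p(1) mpos mle])
      have "(\<Sum>a\<in>A n. pmf (p n) a * (log 2 (pmf (p n) a))^2)
            = (\<Sum>a\<in>A n. pmf (p n) a * (ln (pmf (p n) a))^2) / (ln 2)^2"
        by (simp add: log_def power_divide sum_divide_distrib)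
      also have "\<dots> \<le> (4 * (ln (real (card (A n))))^2 + 16) / (ln 2)^2"
        by (intro divide_right_mono sq_sum[OF finA p(1)]) (use repA in auto)
      also have "ln (real (card (A n))) = real n * ln c"
        by (simp add: cardA c_def ln_realpow)
      also have "(4 * (real n * ln c)^2 + 16) / (ln 2)^2 \<le> D * (real n)^2"
      proof -
        have n2: "(real n)^2 \<ge> 1" using n1 by simp
        have "4 * (real n * ln c)^2 + 16 \<le> (4 * (ln c)^2 + 16) * (real n)^2"
          using n2 by (simp add: power_mult_distrib algebra_simps)
        then show ?thesis unfolding D_def by (simp add: divide_right_mono)
      qed
      finally have vb2: "\<bar>mi_variance (V n) (p n)\<bar> \<le> (log 2 m)^2 + D * (real n)^2"
        using vb by linarith
      have "(log 2 m)^2 \<le> C * (log 2 m)^2"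
        using mult_right_mono[of 1 C "(log 2 m)^2"] by (simp add: C_def)
      moreover have "D * (real n)^2 \<le> C * (real n)^2"
        by (intro mult_right_mono) (auto simp: C_def)
      ultimately have "(log 2 m)^2 + D * (real n)^2 \<le> C * (log 2 m)^2 + C * (real n)^2"
        by linarith
      then have "\<bar>mi_variance (V n) (p n)\<bar> \<le> C * ((- log 2 m)^2 + (real n)^2)"
        using vb2 by (simp add: algebra_simps)
      then show ?thesis using False by (simp add: mpe ereal_power)
    qed
  qed
  show ?thesis
  proof (intro exI[of _ p] conjI)
    show "\<forall>n. set_pmf (p n) \<subseteq> {xs. length xs = n}" using p(1) by (simp add: A_def)
    show "(\<lambda>n. mutual_info (V n) (p n) / real n) \<longlonglongrightarrow> IV" by (rule Lim)
    show "\<exists>C>0. \<forall>\<^sub>F n in sequentially. ereal \<bar>mi_variance (V n) (p n)\<bar>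
                \<le> ereal C * ((min_prob_exp {xs. length xs = n} (V n))^2 + ereal (real n)^2)"
      using Cpos var by (intro exI[of _ C] conjI eventually_sequentiallyI[of 1]) auto
  qed
qed

end
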